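(* Let $G$ be a finite, simple, connected graph of order $n\ge 3$. Then $res_{wt}(G)=n$ if and only if $G$ contains a twin (i.e. some vertex of $G$ is a twin).
   Context: $d(x,y)$ is the shortest-path distance and $N(x)$ the set of neighbors of $x$. A set $W\subseteq V(G)$ is a resolving set if for every two distinct vertices $y,z$ there is $x\in W$ with $d(y,x)\ne d(z,x)$. A set $W$ is a weak total resolving set (WTR-set) if $W$ is resolving and, for every $w\in W$ and every $x\in V(G)\setminus W$, there is $w'\in W\setminus\{w\}$ with $d(x,w')\ne d(w,w')$. The weak total resolving number $res_{wt}(G)$ is the minimum positive integer $r$ such that every set of $r$ vertices of $G$ is a WTR-set for $G$. Two distinct vertices $u,v$ are twins if $N(u)\setminus\{v\}=N(v)\setminus\{u\}$; a vertex $u$ is a twin if there exists $v\ne u$ such that $u,v$ are twins. *)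

theory Defs
  imports Main
begin

definition simple_graph :: "'a set \<Rightarrow> ('a \<Rightarrow> 'a \<Rightarrow> bool) \<Rightarrow> bool" where
  "simple_graph V E \<longleftrightarrow> finite V \<and> (\<forall>x y. E x y \<longrightarrow> x \<in> V \<and> y \<in> V)
     \<and> (\<forall>x y. E x y \<longrightarrow> E y x) \<and> (\<forall>x. \<not> E x x)"

definition edge_rel :: "('a \<Rightarrow> 'a \<Rightarrow> bool) \<Rightarrow> ('a \<times> 'a) set" where
  "edge_rel E = {(x, y). E x y}"

definition connected_graph :: "'a set \<Rightarrow> ('a \<Rightarrow> 'a \<Rightarrow> bool) \<Rightarrow> bool" where
  "connected_graph V E \<longleftrightarrow> (\<forall>x\<in>V. \<forall>y\<in>V. \<exists>k. (x, y) \<in> edge_rel E ^^ k)"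

definition gdist :: "('a \<Rightarrow> 'a \<Rightarrow> bool) \<Rightarrow> 'a \<Rightarrow> 'a \<Rightarrow> nat" where
  "gdist E x y = (LEAST k. (x, y) \<in> edge_rel E ^^ k)"

definition nbhd :: "('a \<Rightarrow> 'a \<Rightarrow> bool) \<Rightarrow> 'a \<Rightarrow> 'a set" where
  "nbhd E x = {y. E x y}"

definition twins :: "('a \<Rightarrow> 'a \<Rightarrow> bool) \<Rightarrow> 'a \<Rightarrow> 'a \<Rightarrow> bool" where
  "twins E u v \<longleftrightarrow> u \<noteq> v \<and> nbhd E u - {v} = nbhd E v - {u}"

definition is_twin :: "'a set \<Rightarrow> ('a \<Rightarrow> 'a \<Rightarrow> bool) \<Rightarrow> 'a \<Rightarrow> bool" where
  "is_twin V E u \<longleftrightarrow> (\<exists>v\<in>V. twins E u v)"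

definition resolving_set :: "'a set \<Rightarrow> ('a \<Rightarrow> 'a \<Rightarrow> bool) \<Rightarrow> 'a set \<Rightarrow> bool" where
  "resolving_set V E W \<longleftrightarrow> W \<subseteq> V \<and>
     (\<forall>y\<in>V. \<forall>z\<in>V. y \<noteq> z \<longrightarrow> (\<exists>x\<in>W. gdist E y x \<noteq> gdist E z x))"

definition wtr_set :: "'a set \<Rightarrow> ('a \<Rightarrow> 'a \<Rightarrow> bool) \<Rightarrow> 'a set \<Rightarrow> bool" where
  "wtr_set V E W \<longleftrightarrow> resolving_set V E W \<and>
     (\<forall>w\<in>W. \<forall>x\<in>V - W. \<exists>w'\<in>W - {w}. gdist E x w' \<noteq> gdist E w w')"

definition res_wt :: "'a set \<Rightarrow> ('a \<Rightarrow> 'a \<Rightarrow> bool) \<Rightarrow> nat" where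
  "res_wt V E = (LEAST r. r > 0 \<and> (\<forall>W. W \<subseteq> V \<and> card W = r \<longrightarrow> wtr_set V E W))"

end

theory Submission
  imports Defs
begin

lemma gd_self: "gdist E x x = 0"
  unfolding gdist_def by (rule Least_eq_0) simp

lemma gd_ex:
  assumes "connected_graph V E" "x \<in> V" "y \<in> V"
  shows "(x, y) \<in> edge_rel E ^^ gdist E x y"
proof -
  obtain k where "(x, y) \<in> edge_rel E ^^ k" using assms unfolding connected_graph_def by blast
  then show ?thesis unfolding gdist_def by (rule LeastI)
qed

lemma gd_pos:
  assumes "connected_graph V E" "x \<in> V" "y \<in> V" "x \<noteq> y"
  shows "gdist E x y \<noteq> 0"
  using gd_ex[OF assms(1-3)] assms(4) by (metis relpow.simps(1) pair_in_Id_conv)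

lemma gd_edge:
  assumes "simple_graph V E" "E x y"
  shows "gdist E x y = 1"
proof -
  have r: "(x, y) \<in> edge_rel E ^^ 1" using assms(2) by (simp add: edge_rel_def)
  have "x \<noteq> y" using assms unfolding simple_graph_def by blast
  then have "\<not> (x, y) \<in> edge_rel E ^^ 0" by simp
  have "gdist E x y \<le> 1" unfolding gdist_def using r by (rule Least_le)
  moreover have "gdist E x y \<noteq> 0" unfolding gdist_def
    by (metis (mono_tags, lifting) LeastI \<open>(x, y) \<notin> edge_rel E ^^ 0\<close> r)
  ultimately show ?thesis by simp
qed

lemma gd_one:
  assumes "connected_graph V E" "x \<in> V" "y \<in> V" "gdist E x y = 1"
  shows "E x y"
  using gd_ex[OF assms(1-3)] assms(4) by (simp add: edge_rel_def)

lemma twin_walk: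
  assumes "twins E u v" "x \<noteq> u" "x \<noteq> v" "(u, x) \<in> edge_rel E ^^ k"
  shows "\<exists>k'\<le>k. (v, x) \<in> edge_rel E ^^ k'"
proof (cases k)
  case 0
  then show ?thesis using assms by simp
next
  case (Suc m)
  then obtain p where p: "(u, p) \<in> edge_rel E" "(p, x) \<in> edge_rel E ^^ m"
    using assms(4) relpow_Suc_D2 by metis
  show ?thesis
  proof (cases "p = v")
    case True
    then show ?thesis using p Suc by (intro exI[of _ m]) auto
  next
    case False
    have "p \<in> nbhd E u - {v}" using p False by (simp add: nbhd_def edge_rel_def)
    then have "p \<in> nbhd E v" using assms(1) unfolding twins_def by blast
    then have "(v, p) \<in> edge_rel E" by (simp add: nbhd_def edge_rel_def)
    then have "(v, x) \<in> edge_rel E ^^ Suc m" using p(2) by (rule relpow_Suc_I2)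
    then show ?thesis using Suc by blast
  qed
qed

lemma twin_le:
  assumes "connected_graph V E" "u \<in> V" "x \<in> V" "twins E u v" "x \<noteq> u" "x \<noteq> v"
  shows "gdist E v x \<le> gdist E u x"
proof -
  obtain k' where "k' \<le> gdist E u x" "(v, x) \<in> edge_rel E ^^ k'"
    using twin_walk[OF assms(4-6) gd_ex[OF assms(1-3)]] by blast
  then show ?thesis unfolding gdist_def by (meson Least_le le_trans)
qed

lemma twin_eq:
  assumes "connected_graph V E" "u \<in> V" "v \<in> V" "x \<in> V" "twins E u v" "x \<noteq> u" "x \<noteq> v"
  shows "gdist E u x = gdist E v x"
proof -
  have "twins E v u" using assms(5) unfolding twins_def by auto
  then show ?thesis using twin_le[OF assms(1,2,4,5,6,7)] twin_le[OF assms(1,3,4) _ assms(7,6)]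
    by (simp add: le_antisym)
qed

theorem theorem5:
  fixes V :: "'a set" and E :: "'a \<Rightarrow> 'a \<Rightarrow> bool"
  assumes "simple_graph V E" and "connected_graph V E" and "card V \<ge> 3"
  shows "res_wt V E = card V \<longleftrightarrow> (\<exists>u\<in>V. is_twin V E u)"
proof -
  have fin: "finite V" using assms(1) unfolding simple_graph_def by blast
  have inV: "\<And>x y. E x y \<Longrightarrow> x \<in> V \<and> y \<in> V" using assms(1) unfolding simple_graph_def by blast
  have irr: "\<And>x. \<not> E x x" using assms(1) unfolding simple_graph_def by blast
  let ?P = "\<lambda>r. r > 0 \<and> (\<forall>W. W \<subseteq> V \<and> card W = r \<longrightarrow> wtr_set V E W)"
  have res_all: "resolving_set V E (V - {u})" if "u \<in> V" for u
    unfolding resolving_set_def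
  proof (intro conjI ballI impI)
    fix y z assume yz: "y \<in> V" "z \<in> V" "y \<noteq> z"
    show "\<exists>x\<in>V - {u}. gdist E y x \<noteq> gdist E z x"
    proof (cases "y = u")
      case True
      then show ?thesis using yz gd_pos[OF assms(2) yz(1,2)] gd_self[of E z]
        by (intro bexI[of _ z]) (auto simp: gd_pos assms(2))
    next
      case False
      then show ?thesis using yz gd_pos[OF assms(2) yz(2,1)] gd_self[of E y]
        by (intro bexI[of _ y]) auto
    qed
  qed auto
  show ?thesis
  proof
    assume h: "res_wt V E = card V"
    show "\<exists>u\<in>V. is_twin V E u"
    proof (rule ccontr)
      assume nt: "\<not> (\<exists>u\<in>V. is_twin V E u)"
      have "?P (card V - 1)"
      proof (intro conjI allI impI)
        show "card V - 1 > 0" using assms(3) by simp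
        fix W assume W: "W \<subseteq> V \<and> card W = card V - 1"
        have "card (V - W) = 1" 
        proof -
          have "finite W" using W fin finite_subset by blast
          then have "card (V - W) = card V - card W" using W card_Diff_subset by blast
          then show ?thesis using W assms(3) by simp
        qed
        then obtain u where u: "V - W = {u}" by (meson card_1_singletonE)
        have uV: "u \<in> V" and Wd: "W = V - {u}" using u W by auto
        show "wtr_set V E W"
          unfolding wtr_set_def
        proof (intro conjI ballI)
          show "resolving_set V E W" using res_all[OF uV] Wd by simp
          fix w x assume w: "w \<in> W" and x: "x \<in> V - W"
          have xu: "x = u" using x u by auto
          have wV: "w \<in> V" "w \<noteq> u" using w Wd by auto
          have "\<not> twins E u w" using nt uV wV unfolding is_twin_def by blast
          then have "nbhd E u - {w} \<noteq> nbhd E w - {u}" using wV unfolding twins_def by auto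
          then obtain t where "\<not>(t \<in> nbhd E u - {w} \<longleftrightarrow> t \<in> nbhd E w - {u})" by blast
          then have t: "(E u t \<and> \<not> E w t \<and> t \<noteq> w) \<or> (E w t \<and> \<not> E u t \<and> t \<noteq> u)"
            unfolding nbhd_def using irr by auto
          show "\<exists>w'\<in>W - {w}. gdist E x w' \<noteq> gdist E w w'"
            using t
          proof
            assume t1: "E u t \<and> \<not> E w t \<and> t \<noteq> w"
            have tV: "t \<in> V" "t \<noteq> u" using t1 inV irr by blast+
            have "gdist E x t = 1" using xu t1 gd_edge[OF assms(1)] by blast
            moreover have "gdist E w t \<noteq> 1" using gd_one[OF assms(2) wV(1) tV(1)] t1 by blast
            ultimately show ?thesis using tV t1 Wd by (intro bexI[of _ t]) auto
          next
            assume t1: "E w t \<and> \<not> E u t \<and> t \<noteq> u"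
            have tV: "t \<in> V" "t \<noteq> w" using t1 inV irr by blast+
            have "gdist E w t = 1" using t1 gd_edge[OF assms(1)] by blast
            moreover have "gdist E x t \<noteq> 1" using gd_one[OF assms(2) uV tV(1)] t1 xu by blast
            ultimately show ?thesis using tV t1 Wd by (intro bexI[of _ t]) auto
          qed
        qed
      qed
      then have "res_wt V E \<le> card V - 1" unfolding res_wt_def by (rule Least_le)
      then show False using h assms(3) by simp
    qed
  next
    assume "\<exists>u\<in>V. is_twin V E u"
    then obtain u v where uv: "u \<in> V" "v \<in> V" "twins E u v" unfolding is_twin_def by blast
    have uv2: "u \<noteq> v" using uv(3) unfolding twins_def by blast
    have PV: "?P (card V)"
    proof (intro conjI allI impI)
      show "card V > 0" using assms(3) by simp
      fix W assume W: "W \<subseteq> V \<and> card W = card V"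
      then have "W = V" using fin card_subset_eq by blast
      have "resolving_set V E V"
        unfolding resolving_set_def
      proof (intro conjI ballI impI)
        fix y z assume yz: "y \<in> V" "z \<in> V" "y \<noteq> z"
        then show "\<exists>x\<in>V. gdist E y x \<noteq> gdist E z x"
          using gd_pos[OF assms(2) yz(2,1)] gd_self[of E y] by (intro bexI[of _ y]) auto
      qed auto
      then show "wtr_set V E W" using \<open>W = V\<close> unfolding wtr_set_def by auto
    qed
    have notP: "\<not> ?P r" if r: "r < card V" for r
    proof
      assume Pr: "?P r"
      show False
      proof (cases "r \<le> card V - 2")
        case True
        have "card (V - {u, v}) = card V - 2" using uv uv2 fin by (simp add: card_Diff_subset)
        then obtain W where W: "W \<subseteq> V - {u, v}" "card W = r"
          using True by (metis obtain_subset_with_card_n)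
        then have "wtr_set V E W" using Pr by blast
        then have "resolving_set V E W" unfolding wtr_set_def by blast
        then obtain x where x: "x \<in> W" "gdist E u x \<noteq> gdist E v x"
          using uv uv2 unfolding resolving_set_def by blast
        then show False using twin_eq[OF assms(2) uv(1,2) _ uv(3)] W by blast
      next
        case False
        then have rr: "r = card V - 1" using r by simp
        have "card (V - {u}) = r" using rr uv fin by simp
        then have "wtr_set V E (V - {u})" using Pr by blast
        then obtain w' where w': "w' \<in> V - {u} - {v}" "gdist E u w' \<noteq> gdist E v w'"
          using uv uv2 unfolding wtr_set_def by blast
        then show False using twin_eq[OF assms(2) uv(1,2) _ uv(3)] by blast
      qed
    qed
    show "res_wt V E = card V" unfolding res_wt_def
    proof (rule Least_equality)
      show "?P (card V)" by (rule PV)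
      show "card V \<le> y" if "?P y" for y using notP[of y] that by (meson not_le)
    qed
  qed
qed

end
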